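(* Let $n,d\in\mathbb{N}$ and let $k\geq 3$ be an integer such that $m=nd/k\in\mathbb{N}$ and $\binom{m}{2}<\binom{n}{k}$. Then \[\mathbb{P}_{\pi_{\mathcal{B}}}\big(\mathcal{B}^*(n,d,k)\big)\geq 1-\binom{m}{2}\binom{n}{k}^{-1}.\] Consequently, if $\mathcal{A}$ is an algorithm sampling from $\mathcal{B}(n,d,k)$ with output distribution $\sigma_{\mathcal{B}}$ satisfying $d_{TV}(\sigma_{\mathcal{B}},\pi_{\mathcal{B}})\leq\varepsilon$ for some $\varepsilon\in(0,1)$, and $\binom{m}{2}\leq c_0\binom{n}{k}$ for some $c_0\in(0,1-\varepsilon)$, then the output distribution $\sigma_{\mathcal{H}}$ of \textsc{HypergraphSampling}$((d,\dots,d),k,\mathcal{A})$ satisfies $d_{TV}(\sigma_{\mathcal{H}},\pi_{\mathcal{H}})\leq \frac{3\varepsilon}{2(1-c_0)}$, and its expected runtime is at most $(1-c_0-\varepsilon)^{-1}(\tau+\rho)$, where $\tau$ is the (expected) runtime of $\mathcal{A}$ and $\rho$ is the runtime of the H-simplicity test.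
   Context: $\mathcal{B}(n,d,k)$ denotes the set of simple bipartite graphs with fixed bipartition $X=\{x_1,\dots,x_n\}$, $Y=\{y_1,\dots,y_m\}$ in which every node of $X$ has degree $d$ and every node of $Y$ has degree $k$. $B$ is H-simple if distinct nodes of $Y$ have distinct neighbourhoods; $\mathcal{B}^*(n,d,k)$ is the set of H-simple elements of $\mathcal{B}(n,d,k)$, and $\pi_{\mathcal{B}}$ is the uniform distribution on $\mathcal{B}(n,d,k)$. For an H-simple $B$, $\varphi(B)$ is the simple $k$-uniform hypergraph on $X$ with edge set $\{\mathcal{N}_B(y):y\in Y\}$; $\pi_{\mathcal{H}}$ is the uniform distribution on the set of simple $k$-uniform $d$-regular hypergraphs on $X$. \textsc{HypergraphSampling}$(\boldsymbol{d},k,\mathcal{A})$ repeatedly samples $B$ using $\mathcal{A}$ until $B$ is H-simple, then outputs $\varphi(B)$; the H-simplicity test also constructs $\varphi(B)$. $d_{TV}$ is total variation distance. *)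

theory Defs
  imports "HOL-Probability.Probability"
begin

text \<open>Bipartite graphs with fixed bipartition X = {0..<n}, Y = {0..<m} are represented by
  their edge sets, i.e. sets of pairs (x, y) with x < n and y < m.\<close>

type_synonym bigraph = "(nat \<times> nat) set"
type_synonym hypergraph = "nat set set"

definition nbhd :: "bigraph \<Rightarrow> nat \<Rightarrow> nat set" where
  "nbhd B y = {x. (x, y) \<in> B}"

text \<open>The set B(n,d,k); here m = nd/k (the caller assumes k divides nd).\<close>
definition bip_set :: "nat \<Rightarrow> nat \<Rightarrow> nat \<Rightarrow> bigraph set" where
  "bip_set n d k = (let m = n * d div k in
     {B. B \<subseteq> {..<n} \<times> {..<m} \<and>
         (\<forall>x<n. card {y. (x, y) \<in> B} = d) \<and>
         (\<forall>y<m. card {x. (x, y) \<in> B} = k)})"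

definition H_simple :: "nat \<Rightarrow> bigraph \<Rightarrow> bool" where
  "H_simple m B \<longleftrightarrow> (\<forall>y1<m. \<forall>y2<m. y1 \<noteq> y2 \<longrightarrow> nbhd B y1 \<noteq> nbhd B y2)"

definition bip_star :: "nat \<Rightarrow> nat \<Rightarrow> nat \<Rightarrow> bigraph set" where
  "bip_star n d k = {B \<in> bip_set n d k. H_simple (n * d div k) B}"

definition phi :: "nat \<Rightarrow> bigraph \<Rightarrow> hypergraph" where
  "phi m B = nbhd B ` {..<m}"

definition hyp_set :: "nat \<Rightarrow> nat \<Rightarrow> nat \<Rightarrow> hypergraph set" where
  "hyp_set n d k = {H. (\<forall>e\<in>H. e \<subseteq> {..<n} \<and> card e = k) \<and>
                        (\<forall>x<n. card {e\<in>H. x \<in> e} = d)}"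

definition pi_B :: "nat \<Rightarrow> nat \<Rightarrow> nat \<Rightarrow> bigraph pmf" where
  "pi_B n d k = pmf_of_set (bip_set n d k)"

definition pi_H :: "nat \<Rightarrow> nat \<Rightarrow> nat \<Rightarrow> hypergraph pmf" where
  "pi_H n d k = pmf_of_set (hyp_set n d k)"

definition dTV :: "'a pmf \<Rightarrow> 'a pmf \<Rightarrow> real" where
  "dTV p q = (SUP A. \<bar>measure_pmf.prob p A - measure_pmf.prob q A\<bar>)"

text \<open>Output distribution of HypergraphSampling((d,...,d),k,A) when A has output
  distribution sigma: repeat sampling B ~ sigma until B is H-simple, output phi(B).\<close>
definition hs_output :: "nat \<Rightarrow> nat \<Rightarrow> nat \<Rightarrow> bigraph pmf \<Rightarrow> hypergraph pmf" where
  "hs_output n d k \<sigma> = map_pmf (phi (n * d div k)) (cond_pmf \<sigma> (bip_star n d k))"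

text \<open>Expected runtime of HypergraphSampling: each round costs tau (run of A) plus rho
  (H-simplicity test, which also builds phi(B)); the rounds are i.i.d., each succeeding with
  probability p = sigma(B*), so the number of rounds is 1 + G with G ~ geometric_pmf p
  (number of failures before the first success).\<close>
definition hs_runtime :: "nat \<Rightarrow> nat \<Rightarrow> nat \<Rightarrow> bigraph pmf \<Rightarrow> real \<Rightarrow> real \<Rightarrow> real" where
  "hs_runtime n d k \<sigma> \<tau> \<rho> =
     measure_pmf.expectation (geometric_pmf (measure_pmf.prob \<sigma> (bip_star n d k)))
       (\<lambda>N. real (N + 1) * (\<tau> + \<rho>))"

end

theory Submission
  imports Defs "HOL-Combinatorics.Multiset_Permutations"
begin


lemma card_swap: "finite A \<Longrightarrow> w \<in> A \<Longrightarrow> z \<notin> A \<Longrightarrow> card (insert z (A - {w})) = card A"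
  by (metis card_Diff1_le card_Suc_Diff1 card_insert_disjoint finite_Diff insert_Diff insert_iff Diff_iff)

definition sw :: "nat \<Rightarrow> nat \<Rightarrow> nat \<Rightarrow> nat \<Rightarrow> bigraph \<Rightarrow> bigraph" where
 "sw p q u v B = (B - {(p,u),(q,v)}) \<union> {(q,u),(p,v)}"

lemma bip_setD:
  assumes "B \<in> bip_set n d k"
  shows "B \<subseteq> {..<n} \<times> {..<n * d div k}" "\<And>x. x < n \<Longrightarrow> card {y. (x, y) \<in> B} = d"
     "\<And>y. y < n * d div k \<Longrightarrow> card {x. (x, y) \<in> B} = k"
  using assms unfolding bip_set_def Let_def by auto

lemma finite_bip: "finite (bip_set n d k)"
proof -
  have "bip_set n d k \<subseteq> Pow ({..<n} \<times> {..<n * d div k})"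
    unfolding bip_set_def Let_def by auto
  then show ?thesis by (rule finite_subset) auto
qed

lemma sw_bip:
  assumes B: "B \<in> bip_set n d k" and h: "(p,u) \<in> B" "(q,u) \<notin> B" "(q,v) \<in> B" "(p,v) \<notin> B"
  shows "sw p q u v B \<in> bip_set n d k"
proof -
  define m where "m = n * d div k"
  note D = bip_setD[OF B, folded m_def]
  have pq: "p \<noteq> q" "u \<noteq> v" using h by auto
  have lt: "p < n" "q < n" "u < m" "v < m" using h D(1) by auto
  have memsw: "\<And>a b. (a,b) \<in> sw p q u v B \<longleftrightarrow> ((a,b) \<in> B \<and> (a,b) \<noteq> (p,u) \<and> (a,b) \<noteq> (q,v)) \<or> (a,b) = (q,u) \<or> (a,b) = (p,v)"
    unfolding sw_def by blast
  have finX: "finite {y. (x, y) \<in> B}" for x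
    by (rule finite_subset[of _ "{..<m}"]) (use D(1) in auto)
  have finY: "finite {x. (x, y) \<in> B}" for y
    by (rule finite_subset[of _ "{..<n}"]) (use D(1) in auto)
  have sub: "sw p q u v B \<subseteq> {..<n} \<times> {..<m}"
    using D(1) lt unfolding sw_def by auto
  have degX: "card {y. (x, y) \<in> sw p q u v B} = d" if "x < n" for x
  proof -
    consider "x = p" | "x = q" | "x \<noteq> p" "x \<noteq> q" by blast
    then show ?thesis
    proof cases
      case 1
      then have "{y. (x, y) \<in> sw p q u v B} = insert v ({y. (p, y) \<in> B} - {u})"
        using memsw pq h by auto
      then show ?thesis using card_swap[OF finX, of u p v] h D(2)[OF that] 1 by simp
    next
      case 2
      then have "{y. (x, y) \<in> sw p q u v B} = insert u ({y. (q, y) \<in> B} - {v})"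
        using memsw pq h by auto
      then show ?thesis using card_swap[OF finX, of v q u] h D(2)[OF that] 2 by simp
    next
      case 3
      then have "{y. (x, y) \<in> sw p q u v B} = {y. (x, y) \<in> B}"
        using memsw by auto
      then show ?thesis using D(2)[OF that] by simp
    qed
  qed
  have degY: "card {x. (x, y) \<in> sw p q u v B} = k" if "y < m" for y
  proof -
    consider "y = u" | "y = v" | "y \<noteq> u" "y \<noteq> v" by blast
    then show ?thesis
    proof cases
      case 1
      then have "{x. (x, y) \<in> sw p q u v B} = insert q ({x. (x, u) \<in> B} - {p})"
        using memsw pq h by auto
      then show ?thesis using card_swap[OF finY, of p u q] h D(3)[OF that] 1 by simp
    next
      case 2
      then have "{x. (x, y) \<in> sw p q u v B} = insert p ({x. (x, v) \<in> B} - {q})"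
        using memsw pq h by auto
      then show ?thesis using card_swap[OF finY, of q v p] h D(3)[OF that] 2 by simp
    next
      case 3
      then have "{x. (x, y) \<in> sw p q u v B} = {x. (x, y) \<in> B}"
        using memsw by auto
      then show ?thesis using D(3)[OF that] by simp
    qed
  qed
  show ?thesis unfolding bip_set_def Let_def using sub degX degY m_def by auto
qed


definition nX :: "bigraph \<Rightarrow> nat \<Rightarrow> nat set" where
  "nX B x = {y. (x, y) \<in> B}"

definition W :: "nat \<Rightarrow> nat \<Rightarrow> nat \<Rightarrow> nat \<Rightarrow> nat \<Rightarrow> nat set \<Rightarrow> nat set \<Rightarrow> bigraph set" where
  "W n d k y1 y2 S T = {B \<in> bip_set n d k. nbhd B y1 = S \<and> nbhd B y2 = T}"

lemma sw_sw: "(p,u) \<in> B \<Longrightarrow> (q,v) \<in> B \<Longrightarrow> (q,u) \<notin> B \<Longrightarrow> (p,v) \<notin> B \<Longrightarrow> sw q p u v (sw p q u v B) = B"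
  unfolding sw_def by blast

lemma finite_nX: "B \<in> bip_set n d k \<Longrightarrow> finite (nX B x)"
proof -
  assume "B \<in> bip_set n d k"
  then have "nX B x \<subseteq> {..<n * d div k}" using bip_setD(1) unfolding nX_def by blast
  then show ?thesis by (rule finite_subset) simp
qed
lemma card_nX: "B \<in> bip_set n d k \<Longrightarrow> x < n \<Longrightarrow> card (nX B x) = d"
  using bip_setD(2) unfolding nX_def by blast


lemma W_switch:
  assumes y12: "y1 \<noteq> y2" and a: "a \<in> S" "a \<in> T" "a < n" and b: "b \<notin> S" "b \<notin> T" "b < n"
  shows "card (W n d k y1 y2 S T) \<le> card (W n d k y1 y2 S (insert b (T - {a})))"
proof -
  define T' where "T' = insert b (T - {a})"
  define WW where "WW = W n d k y1 y2 S T"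
  define WW' where "WW' = W n d k y1 y2 S T'"
  define c :: "bigraph \<Rightarrow> nat" where "c B = card (nX B a \<inter> nX B b)" for B
  define Yp :: "bigraph \<Rightarrow> nat set" where "Yp B = {y. (b,y) \<in> B \<and> (a,y) \<notin> B}" for B
  define Yq :: "bigraph \<Rightarrow> nat set" where "Yq B = {y. (a,y) \<in> B \<and> (b,y) \<notin> B \<and> y \<noteq> y1}" for B
  define P where "P = Sigma WW Yp"
  define P' where "P' = Sigma WW' Yq"
  define f :: "bigraph \<times> nat \<Rightarrow> bigraph \<times> nat" where "f z = (sw b a (snd z) y2 (fst z), snd z)" for z
  define g :: "bigraph \<times> nat \<Rightarrow> bigraph \<times> nat" where "g z = (sw a b (snd z) y2 (fst z), snd z)" for z
  have ab: "a \<noteq> b" using a b by auto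
  have finW: "finite WW" "finite WW'" unfolding WW_def WW'_def W_def
    using finite_bip by auto
  have WWD: "B \<in> bip_set n d k" "(a, y1) \<in> B" "(a, y2) \<in> B" "(b, y1) \<notin> B" "(b, y2) \<notin> B"
    if "B \<in> WW" for B using that a b unfolding WW_def W_def nbhd_def by auto
  have WWD': "B \<in> bip_set n d k" "(a, y1) \<in> B" "(a, y2) \<notin> B" "(b, y1) \<notin> B" "(b, y2) \<in> B"
    if "B \<in> WW'" for B using that a b ab unfolding WW'_def W_def nbhd_def T'_def by auto
  have fP: "f z \<in> P'" if zP: "z \<in> P" for z
  proof -
    obtain B y where z: "z = (B, y)" "B \<in> WW" "(b,y) \<in> B" "(a,y) \<notin> B"
      using zP unfolding P_def Yp_def by (cases z) auto
    note D = WWD[OF z(2)]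
    have yy: "y \<noteq> y1" "y \<noteq> y2" using z D by auto
    have "sw b a y y2 B \<in> bip_set n d k" by (rule sw_bip) (use D z in auto)
    moreover have "nbhd (sw b a y y2 B) y1 = S" using z(2) yy y12 unfolding WW_def W_def nbhd_def sw_def by auto
    moreover have "nbhd (sw b a y y2 B) y2 = T'" using z(2) yy y12 ab unfolding WW_def W_def nbhd_def sw_def T'_def by auto
    ultimately have "sw b a y y2 B \<in> WW'" unfolding WW'_def W_def by auto
    moreover have "y \<in> Yq (sw b a y y2 B)" using yy ab unfolding Yq_def sw_def by auto
    ultimately show ?thesis unfolding P'_def f_def z by auto
  qed
  have gP: "g z \<in> P" if zP: "z \<in> P'" for z
  proof -
    obtain B y where z: "z = (B, y)" "B \<in> WW'" "(a,y) \<in> B" "(b,y) \<notin> B" "y \<noteq> y1"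
      using zP unfolding P'_def Yq_def by (cases z) auto
    note D = WWD'[OF z(2)]
    have yy: "y \<noteq> y1" "y \<noteq> y2" using z D by auto
    have "sw a b y y2 B \<in> bip_set n d k" by (rule sw_bip) (use D z in auto)
    moreover have "nbhd (sw a b y y2 B) y1 = S" using z(2) yy y12 unfolding WW'_def W_def nbhd_def sw_def by auto
    moreover have "nbhd (sw a b y y2 B) y2 = T" using z(2) yy y12 ab a b unfolding WW'_def W_def nbhd_def sw_def T'_def by auto
    ultimately have "sw a b y y2 B \<in> WW" unfolding WW_def W_def by auto
    moreover have "y \<in> Yp (sw a b y y2 B)" using yy ab unfolding Yp_def sw_def by auto
    ultimately show ?thesis unfolding P_def g_def z by auto
  qed
  have gf: "g (f z) = z" if zP: "z \<in> P" for z
  proof -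
    obtain B y where z: "z = (B, y)" "B \<in> WW" "(b,y) \<in> B" "(a,y) \<notin> B"
      using zP unfolding P_def Yp_def by (cases z) auto
    note D = WWD[OF z(2)]
    show ?thesis unfolding z f_def g_def using sw_sw[of b y B a y2] z D by auto
  qed
  have fg: "f (g z) = z" if zP: "z \<in> P'" for z
  proof -
    obtain B y where z: "z = (B, y)" "B \<in> WW'" "(a,y) \<in> B" "(b,y) \<notin> B"
      using zP unfolding P'_def Yq_def by (cases z) auto
    note D = WWD'[OF z(2)]
    show ?thesis unfolding z f_def g_def using sw_sw[of a y B b y2] z D by auto
  qed
  have bij: "bij_betw g P' P"
    by (rule bij_betw_byWitness[where f' = f]) (use fP gP gf fg in auto)
  have cg: "c (fst (g z)) = c (fst z)" if zP: "z \<in> P'" for z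
  proof -
    obtain B y where z: "z = (B, y)" "B \<in> WW'" "(a,y) \<in> B" "(b,y) \<notin> B"
      using zP unfolding P'_def Yq_def by (cases z) auto
    note D = WWD'[OF z(2)]
    have "nX (sw a b y y2 B) a \<inter> nX (sw a b y y2 B) b = nX B a \<inter> nX B b"
      using z D ab unfolding nX_def sw_def by auto
    then show ?thesis unfolding c_def g_def z by simp
  qed
  have cardYp: "real (card (Yp B)) = real d - real (c B)" and cpos: "real d - real (c B) > 0"
    if "B \<in> WW" for B
  proof -
    note D = WWD[OF that]
    have "Yp B = nX B b - (nX B a \<inter> nX B b)" unfolding Yp_def nX_def by auto
    moreover have "card (nX B b - (nX B a \<inter> nX B b)) = card (nX B b) - c B"
      unfolding c_def by (rule card_Diff_subset) (use finite_nX[OF D(1)] in auto)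
    moreover have "c B \<le> card (nX B b)" unfolding c_def
      by (rule card_mono) (use finite_nX[OF D(1)] in auto)
    ultimately show "real (card (Yp B)) = real d - real (c B)"
      using card_nX[OF D(1) b(3)] by simp
    have "nX B a \<inter> nX B b \<subseteq> nX B a - {y1}" using D unfolding nX_def by auto
    then have "c B \<le> card (nX B a - {y1})" unfolding c_def
      by (rule card_mono[rotated]) (use finite_nX[OF D(1)] in auto)
    also have "\<dots> < card (nX B a)"
      by (rule card_Diff1_less) (use finite_nX[OF D(1)] D in \<open>auto simp: nX_def\<close>)
    finally show "real d - real (c B) > 0" using card_nX[OF D(1) a(3)] by simp
  qed
  have cardYq: "real (card (Yq B)) / (real d - real (c B)) \<le> 1" if "B \<in> WW'" for B
  proof -
    note D = WWD'[OF that]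
    have "Yq B \<subseteq> nX B a - (nX B a \<inter> nX B b)" unfolding Yq_def nX_def by auto
    then have "card (Yq B) \<le> card (nX B a - (nX B a \<inter> nX B b))"
      by (rule card_mono[rotated]) (use finite_nX[OF D(1)] in auto)
    also have "card (nX B a - (nX B a \<inter> nX B b)) = card (nX B a) - c B"
      unfolding c_def by (rule card_Diff_subset) (use finite_nX[OF D(1)] in auto)
    finally have "card (Yq B) \<le> d - c B" using card_nX[OF D(1) a(3)] by simp
    moreover have "c B \<le> card (nX B a)" unfolding c_def
      by (rule card_mono) (use finite_nX[OF D(1)] in auto)
    ultimately show ?thesis using card_nX[OF D(1) a(3)]
      by (cases "real d - real (c B) = 0") (auto simp: divide_le_eq_1 of_nat_diff)
  qed
  have finYp: "finite (Yp B)" if "B \<in> WW" for B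
    using finite_nX[OF WWD(1)[OF that], of b] unfolding Yp_def nX_def by (auto intro: finite_subset)
  have finYq: "finite (Yq B)" if "B \<in> WW'" for B
    using finite_nX[OF WWD'(1)[OF that], of a] unfolding Yq_def nX_def by (auto intro: finite_subset)
  have "real (card WW) = (\<Sum>B\<in>WW. \<Sum>y\<in>Yp B. 1 / (real d - real (c B)))"
  proof -
    have one: "(\<Sum>y\<in>Yp B. 1 / (real d - real (c B))) = 1" if "B \<in> WW" for B
      using cardYp[OF that] cpos[OF that] by (simp only: sum_constant) simp
    then have "(\<Sum>B\<in>WW. \<Sum>y\<in>Yp B. 1 / (real d - real (c B))) = (\<Sum>B\<in>WW. 1)"
      using one by (intro sum.cong refl) blast
    then show ?thesis by simp
  qed
  also have "\<dots> = (\<Sum>z\<in>P. 1 / (real d - real (c (fst z))))"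
    unfolding P_def by (subst sum.Sigma) (use finW finYp in \<open>auto simp: case_prod_beta\<close>)
  also have "\<dots> = (\<Sum>z\<in>P'. 1 / (real d - real (c (fst (g z)))))"
    by (rule sum.reindex_bij_betw[OF bij, symmetric])
  also have "\<dots> = (\<Sum>z\<in>P'. 1 / (real d - real (c (fst z))))"
    by (rule sum.cong) (use cg in auto)
  also have "\<dots> = (\<Sum>B\<in>WW'. \<Sum>y\<in>Yq B. 1 / (real d - real (c B)))"
    unfolding P'_def by (subst sum.Sigma) (use finW finYq in \<open>auto simp: case_prod_beta\<close>)
  also have "\<dots> = (\<Sum>B\<in>WW'. real (card (Yq B)) / (real d - real (c B)))"
    by simp
  also have "\<dots> \<le> (\<Sum>B\<in>WW'. 1)"
    by (rule sum_mono) (use cardYq in auto)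
  also have "\<dots> = real (card WW')" by simp
  finally show ?thesis unfolding WW_def WW'_def T'_def by simp
qed




lemma W_chain:
  assumes y12: "y1 \<noteq> y2" and S: "S \<subseteq> {..<n}" 
  shows "T \<subseteq> {..<n} \<Longrightarrow> card T = card S \<Longrightarrow> card (T - S) = j \<Longrightarrow>
         card (W n d k y1 y2 S S) \<le> card (W n d k y1 y2 S T)"
proof (induction j arbitrary: T)
  case 0
  have fin: "finite S" "finite T" using S 0(1) by (auto intro: finite_subset)
  have "T \<subseteq> S" using 0(3) fin by auto
  then have "T = S" using card_subset_eq[OF fin(1)] 0(2) by auto
  then show ?case by simp
next
  case (Suc j)
  have fin: "finite S" "finite T" using S Suc(2) by (auto intro: finite_subset)
  obtain b where b: "b \<in> T" "b \<notin> S" using Suc(4) by (metis Diff_iff card.empty ex_in_conv nat.distinct(1))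
  have "card (S - T) = card S - card (S \<inter> T)" using fin by (simp add: card_Diff_subset_Int)
  also have "\<dots> = card T - card (T \<inter> S)" using Suc(3) by (simp add: Int_commute)
  also have "\<dots> = card (T - S)" using fin by (simp add: card_Diff_subset_Int)
  finally have "card (S - T) = Suc j" using Suc(4) by simp
  then obtain a where a: "a \<in> S" "a \<notin> T" by (metis Diff_iff card.empty ex_in_conv nat.distinct(1))
  define T0 where "T0 = insert a (T - {b})"
  have ab: "a \<noteq> b" using a b by auto
  have T0n: "T0 \<subseteq> {..<n}" using Suc(2) S a unfolding T0_def by auto
  have "card S > 0" using fin a card_gt_0_iff by blast
  then have cT0: "card T0 = card S" unfolding T0_def using fin a b Suc(3)
    by (simp add: card_Diff_singleton)
  have "T0 - S = (T - S) - {b}" unfolding T0_def using a ab by auto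
  then have "card (T0 - S) = j" using Suc(4) b fin by (simp add: card_Diff_singleton)
  then have IH: "card (W n d k y1 y2 S S) \<le> card (W n d k y1 y2 S T0)"
    using Suc.IH T0n cT0 by blast
  have "card (W n d k y1 y2 S T0) \<le> card (W n d k y1 y2 S (insert b (T0 - {a})))"
    by (rule W_switch) (use y12 a b ab S Suc(2) in \<open>auto simp: T0_def\<close>)
  moreover have "insert b (T0 - {a}) = T" unfolding T0_def using a b ab by auto
  ultimately show ?case using IH by simp
qed

definition Ksets :: "nat \<Rightarrow> nat \<Rightarrow> nat set set" where
  "Ksets n k = {S. S \<subseteq> {..<n} \<and> card S = k}"

lemma nbhd_K: "B \<in> bip_set n d k \<Longrightarrow> y < n * d div k \<Longrightarrow> nbhd B y \<in> Ksets n k"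
  using bip_setD[of B n d k] unfolding Ksets_def nbhd_def by blast

lemma finite_K: "finite (Ksets n k)"
  unfolding Ksets_def by (rule finite_subset[of _ "Pow {..<n}"]) auto

lemma card_K: "card (Ksets n k) = n choose k"
  unfolding Ksets_def using n_subsets[of "{..<n}" k] by simp

lemma bad_pair:
  assumes y12: "y1 \<noteq> y2" "y1 < n * d div k" "y2 < n * d div k"
  shows "card {B \<in> bip_set n d k. nbhd B y1 = nbhd B y2} * (n choose k) \<le> card (bip_set n d k)"
proof -
  let ?K = "Ksets n k" and ?bip = "bip_set n d k"
  let ?W = "W n d k y1 y2"
  let ?bad = "{B \<in> bip_set n d k. nbhd B y1 = nbhd B y2}"
  have "card ?bip = (\<Sum>ST\<in>?K \<times> ?K. card {B \<in> ?bip. (nbhd B y1, nbhd B y2) = ST})"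
  proof -
    have img: "(\<lambda>B. (nbhd B y1, nbhd B y2)) ` ?bip \<subseteq> ?K \<times> ?K" using nbhd_K y12 by auto
    show ?thesis using sum.group[OF finite_bip _ img, of "\<lambda>_. 1::nat"] finite_K by simp
  qed
  also have "\<dots> = (\<Sum>S\<in>?K. \<Sum>T\<in>?K. card (?W S T))"
    unfolding sum.cartesian_product W_def by (intro sum.cong refl) (auto simp: case_prod_beta)
  finally have e1: "card ?bip = (\<Sum>S\<in>?K. \<Sum>T\<in>?K. card (?W S T))" .
  have "card ?bad = (\<Sum>S\<in>?K. card {B \<in> ?bad. nbhd B y1 = S})"
  proof -
    have img: "(\<lambda>B. nbhd B y1) ` ?bad \<subseteq> ?K" using nbhd_K y12 by auto
    have fb: "finite ?bad" using finite_bip by simp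
    show ?thesis using sum.group[OF fb finite_K img, of "\<lambda>_. 1::nat"] by simp
  qed
  also have "\<dots> = (\<Sum>S\<in>?K. card (?W S S))"
    unfolding W_def by (intro sum.cong refl arg_cong[where f = card]) auto
  finally have e2: "card ?bad = (\<Sum>S\<in>?K. card (?W S S))" .
  have "card ?bad * (n choose k) = (\<Sum>S\<in>?K. \<Sum>T\<in>?K. card (?W S S))"
    unfolding e2 card_K[symmetric] by (simp add: sum_distrib_left sum_distrib_right mult.commute)
  also have "\<dots> \<le> (\<Sum>S\<in>?K. \<Sum>T\<in>?K. card (?W S T))"
  proof (intro sum_mono)
    fix S T assume "S \<in> ?K" "T \<in> ?K"
    then show "card (?W S S) \<le> card (?W S T)"
      using W_chain[OF y12(1), of S n T "card (T - S)" d k] unfolding Ksets_def by auto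
  qed
  finally show ?thesis using e1 by simp
qed

definition Pairs :: "nat \<Rightarrow> (nat \<times> nat) set" where
  "Pairs m = {(y1, y2). y1 < y2 \<and> y2 < m}"

lemma card_Pairs: "finite (Pairs m) \<and> card (Pairs m) = m choose 2"
proof (induction m)
  case 0
  then show ?case by (simp add: Pairs_def)
next
  case (Suc m)
  have e: "Pairs (Suc m) = Pairs m \<union> (\<lambda>y. (y, m)) ` {..<m}"
    unfolding Pairs_def by (auto simp: less_Suc_eq)
  have dj: "Pairs m \<inter> (\<lambda>y. (y, m)) ` {..<m} = {}" unfolding Pairs_def by auto
  have "card (Pairs (Suc m)) = card (Pairs m) + card ((\<lambda>y. (y, m)) ` {..<m})"
    unfolding e using Suc dj by (intro card_Un_disjoint) auto
  also have "card ((\<lambda>y. (y, m)) ` {..<m}) = m" by (subst card_image) (auto simp: inj_on_def)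
  finally have "card (Pairs (Suc m)) = (m choose 2) + m" using Suc by simp
  also have "\<dots> = Suc m choose 2" by (simp add: numeral_2_eq_2)
  finally show ?case using Suc e by simp
qed

lemma bad_total:
  "card (bip_set n d k - bip_star n d k) * (n choose k) \<le> (n * d div k choose 2) * card (bip_set n d k)"
proof -
  let ?m = "n * d div k"
  let ?bad = "\<lambda>p. {B \<in> bip_set n d k. nbhd B (fst p) = nbhd B (snd p)}"
  have sub: "bip_set n d k - bip_star n d k \<subseteq> (\<Union>p\<in>Pairs ?m. ?bad p)"
  proof
    fix B assume B: "B \<in> bip_set n d k - bip_star n d k"
    then obtain y1 y2 where y: "y1 < ?m" "y2 < ?m" "y1 \<noteq> y2" "nbhd B y1 = nbhd B y2"
      unfolding bip_star_def H_simple_def by auto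
    show "B \<in> (\<Union>p\<in>Pairs ?m. ?bad p)"
    proof (cases "y1 < y2")
      case True
      then show ?thesis using y B by (intro UN_I[of "(y1, y2)"]) (auto simp: Pairs_def)
    next
      case False
      then show ?thesis using y B by (intro UN_I[of "(y2, y1)"]) (auto simp: Pairs_def)
    qed
  qed
  have "card (bip_set n d k - bip_star n d k) \<le> card (\<Union>p\<in>Pairs ?m. ?bad p)"
    by (rule card_mono[OF _ sub]) (rule finite_subset[OF _ finite_bip], auto)
  also have "\<dots> \<le> (\<Sum>p\<in>Pairs ?m. card (?bad p))"
    by (rule card_UN_le) (use card_Pairs in auto)
  finally have "card (bip_set n d k - bip_star n d k) * (n choose k) \<le> (\<Sum>p\<in>Pairs ?m. card (?bad p)) * (n choose k)"
    by simp
  also have "\<dots> = (\<Sum>p\<in>Pairs ?m. card (?bad p) * (n choose k))" by (simp add: sum_distrib_right)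
  also have "\<dots> \<le> (\<Sum>p\<in>Pairs ?m. card (bip_set n d k))"
    by (rule sum_mono) (use bad_pair in \<open>auto simp: Pairs_def\<close>)
  also have "\<dots> = (?m choose 2) * card (bip_set n d k)" using card_Pairs by simp
  finally show ?thesis .
qed




lemma bip_nonempty:
  assumes k: "k > 0" and dvd: "k dvd n * d" and kn: "k \<le> n"
  shows "bip_set n d k \<noteq> {}"
proof (cases "d = 0")
  case True
  then have "{} \<in> bip_set n d k" unfolding bip_set_def Let_def by auto
  then show ?thesis by auto
next
  case False
  define m where "m = n * d div k"
  have nd: "n * d = k * m" unfolding m_def using dvd by simp
  have dm: "d \<le> m"
  proof -
    have "k * d \<le> n * d" using kn by simp
    then have "k * d \<le> k * m" using nd by simp
    then show ?thesis using k by simp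
  qed
  have mpos: "m > 0" using dm False by simp
  define B0 where "B0 = (\<lambda>j. (j div d, j mod m)) ` {..<n * d}"
  have sub: "B0 \<subseteq> {..<n} \<times> {..<m}"
  proof
    fix z assume "z \<in> B0"
    then obtain j where j: "j < n * d" "z = (j div d, j mod m)" unfolding B0_def by auto
    have "j div d < n" using j(1) False by (simp add: div_less_iff_less_mult)
    then show "z \<in> {..<n} \<times> {..<m}" using j mpos by simp
  qed
  have degX: "card {y. (x, y) \<in> B0} = d" if x: "x < n" for x
  proof -
    have "{y. (x, y) \<in> B0} = (\<lambda>j. j mod m) ` {x * d..<x * d + d}"
    proof (intro set_eqI iffI)
      fix y assume "y \<in> {y. (x, y) \<in> B0}"
      then obtain j where j: "j < n * d" "x = j div d" "y = j mod m" unfolding B0_def by auto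
      have "x * d \<le> j" using j(2) div_times_less_eq_dividend[of j d] by simp
      moreover have "j < x * d + d" using j(2) dividend_less_div_times[of d j] False by simp
      ultimately have "x * d \<le> j" "j < x * d + d" by auto
      then show "y \<in> (\<lambda>j. j mod m) ` {x * d..<x * d + d}" using j by auto
    next
      fix y assume "y \<in> (\<lambda>j. j mod m) ` {x * d..<x * d + d}"
      then obtain j where j: "x * d \<le> j" "j < x * d + d" "y = j mod m" by auto
      have "j div d = x" using j by (intro div_nat_eqI) (simp_all add: mult.commute)
      moreover have "j < n * d"
      proof -
        have "Suc x * d \<le> n * d" using x by (intro mult_le_mono1) simp
        then have "x * d + d \<le> n * d" by simp
        then show ?thesis using j by simp
      qed
      ultimately show "y \<in> {y. (x, y) \<in> B0}" unfolding B0_def using j by force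
    qed
    moreover have "inj_on (\<lambda>j. j mod m) {x * d..<x * d + d}"
    proof (rule inj_onI)
      fix i j assume ij: "i \<in> {x * d..<x * d + d}" "j \<in> {x * d..<x * d + d}" "i mod m = j mod m"
      show "i = j"
      proof (rule ccontr)
        assume "i \<noteq> j"
        then consider "i < j" | "j < i" by linarith
        then show False
        proof cases
          case 1
          then have "m dvd j - i" using ij(3) mod_eq_dvd_iff_nat[of i j m] by simp
          then have "m \<le> j - i" using 1 by (simp add: dvd_imp_le)
          then show False using ij(1,2) 1 dm by auto
        next
          case 2
          then have "m dvd i - j" using ij(3) mod_eq_dvd_iff_nat[of j i m] by simp
          then have "m \<le> i - j" using 2 by (simp add: dvd_imp_le)
          then show False using ij(1,2) 2 dm by auto
        qed
      qed
    qed
    ultimately show ?thesis by (simp add: card_image)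
  qed
  have degY: "card {x. (x, y) \<in> B0} = k" if y: "y < m" for y
  proof -
    define J where "J = (\<lambda>t. t * m + y) ` {..<k}"
    have J: "J = {j. j < n * d \<and> j mod m = y}"
    proof (intro set_eqI iffI)
      fix j assume "j \<in> J"
      then obtain t where t: "t < k" "j = t * m + y" unfolding J_def by auto
      have "t * m + y < t * m + m" using y by simp
      also have "\<dots> = Suc t * m" by simp
      also have "\<dots> \<le> k * m" using t(1) by (intro mult_le_mono1) simp
      finally show "j \<in> {j. j < n * d \<and> j mod m = y}" using t y nd by simp
    next
      fix j assume "j \<in> {j. j < n * d \<and> j mod m = y}"
      then have j: "j < k * m" "j mod m = y" using nd by auto
      have "j div m < k" using j(1) mpos by (simp add: div_less_iff_less_mult)
      moreover have "j = (j div m) * m + y" using j(2) by (metis div_mult_mod_eq)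
      ultimately show "j \<in> J" unfolding J_def by auto
    qed
    have cJ: "card J = k" unfolding J_def using mpos by (subst card_image) (auto simp: inj_on_def)
    have "{x. (x, y) \<in> B0} = (\<lambda>j. j div d) ` J"
      unfolding J B0_def using y by auto
    moreover have "inj_on (\<lambda>j. j div d) J"
    proof (rule inj_onI)
      fix i j assume ij: "i \<in> J" "j \<in> J" "i div d = j div d"
      obtain s t where st: "i = s * m + y" "j = t * m + y" using ij unfolding J_def by auto
      show "i = j"
      proof (rule ccontr)
        assume "i \<noteq> j"
        then have "s \<noteq> t" using st by auto
        then consider "s < t" | "t < s" by linarith
        then show False
        proof cases
          case 1
          then have "Suc s * m \<le> t * m" by (intro mult_le_mono1) simp
          then have "i + m \<le> j" using st by simp
          then have "i + d \<le> j" using dm by simp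
          then have "(i + d) div d \<le> j div d" by (rule div_le_mono)
          then have "i div d < j div d" using False by simp
          then show False using ij by simp
        next
          case 2
          then have "Suc t * m \<le> s * m" by (intro mult_le_mono1) simp
          then have "j + m \<le> i" using st by simp
          then have "j + d \<le> i" using dm by simp
          then have "(j + d) div d \<le> i div d" by (rule div_le_mono)
          then have "j div d < i div d" using False by simp
          then show False using ij by simp
        qed
      qed
    qed
    ultimately show ?thesis using cJ by (simp add: card_image)
  qed
  have "B0 \<in> bip_set n d k" unfolding bip_set_def Let_def using sub degX degY m_def by auto
  then show ?thesis by auto
qed




lemma phi_in_hyp:
  assumes B: "B \<in> bip_star n d k"
  shows "phi (n * d div k) B \<in> hyp_set n d k"
proof -
  define m where "m = n * d div k"
  have Bb: "B \<in> bip_set n d k" and hs: "H_simple m B" using B unfolding bip_star_def m_def by auto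
  note D = bip_setD[OF Bb, folded m_def]
  have inj: "inj_on (nbhd B) {..<m}" using hs unfolding H_simple_def inj_on_def by auto
  have edges: "e \<subseteq> {..<n} \<and> card e = k" if eP: "e \<in> phi m B" for e
  proof -
    obtain y where y: "y < m" "e = nbhd B y" using eP unfolding phi_def by auto
    then show ?thesis using D unfolding nbhd_def by auto
  qed
  have deg: "card {e \<in> phi m B. x \<in> e} = d" if x: "x < n" for x
  proof -
    have "{e \<in> phi m B. x \<in> e} = nbhd B ` {y \<in> {..<m}. x \<in> nbhd B y}"
      unfolding phi_def by auto
    moreover have "inj_on (nbhd B) {y \<in> {..<m}. x \<in> nbhd B y}"
      by (rule inj_on_subset[OF inj]) auto
    moreover have "{y \<in> {..<m}. x \<in> nbhd B y} = {y. (x, y) \<in> B}"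
      using D(1) unfolding nbhd_def by auto
    ultimately show ?thesis using D(2)[OF x] by (simp add: card_image)
  qed
  show ?thesis unfolding hyp_set_def using edges deg m_def by auto
qed

lemma finite_hyp_set: "finite (hyp_set n d k)"
proof -
  have "hyp_set n d k \<subseteq> Pow (Pow {..<n})" unfolding hyp_set_def by auto
  then show ?thesis by (rule finite_subset) auto
qed

lemma card_hyp:
  assumes k: "k > 0" and dvd: "k dvd n * d" and h: "h \<in> hyp_set n d k"
  shows "finite h" "card h = n * d div k"
proof -
  have hs: "h \<subseteq> Pow {..<n}" using h unfolding hyp_set_def by auto
  then show fh: "finite h" by (rule finite_subset) auto
  have "n * d = (\<Sum>x<n. card {e \<in> h. x \<in> e})" using h unfolding hyp_set_def by simp
  also have "\<dots> = (\<Sum>x<n. \<Sum>e\<in>h. if x \<in> e then 1 else 0)"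
    using fh by (simp add: sum.inter_filter[symmetric])
  also have "\<dots> = (\<Sum>e\<in>h. \<Sum>x<n. if x \<in> e then 1 else 0)" by (rule sum.swap)
  also have "\<dots> = (\<Sum>e\<in>h. card {x \<in> {..<n}. x \<in> e})"
    by (simp add: sum.inter_filter[symmetric])
  also have "\<dots> = (\<Sum>e\<in>h. k)"
  proof (rule sum.cong[OF refl])
    fix e assume "e \<in> h"
    then have "e \<subseteq> {..<n}" "card e = k" using h unfolding hyp_set_def by auto
    moreover have "{x \<in> {..<n}. x \<in> e} = e" using calculation by auto
    ultimately show "card {x \<in> {..<n}. x \<in> e} = k" by simp
  qed
  also have "\<dots> = k * card h" by simp
  finally show "card h = n * d div k" using k by simp
qed

definition Lst :: "nat \<Rightarrow> bigraph \<Rightarrow> nat set list" where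
  "Lst m B = map (nbhd B) [0..<m]"

definition Rel :: "nat set list \<Rightarrow> bigraph" where
  "Rel xs = {(x, y). y < length xs \<and> x \<in> xs ! y}"

lemma fiber_card:
  assumes k: "k > 0" and dvd: "k dvd n * d" and h: "h \<in> hyp_set n d k"
  shows "card {B \<in> bip_star n d k. phi (n * d div k) B = h} = fact (n * d div k)"
proof -
  define m where "m = n * d div k"
  define F where "F = {B \<in> bip_star n d k. phi m B = h}"
  have fh: "finite h" and ch: "card h = m" using card_hyp[OF k dvd h] m_def by auto
  have hD: "e \<subseteq> {..<n}" "card e = k" if "e \<in> h" for e using h that unfolding hyp_set_def by auto
  have hdeg: "card {e \<in> h. x \<in> e} = d" if "x < n" for x using h that unfolding hyp_set_def by auto
  have L: "Lst m B \<in> permutations_of_set h" if B: "B \<in> F" for B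
  proof -
    have Bs: "B \<in> bip_star n d k" "phi m B = h" using B unfolding F_def by auto
    have hs: "H_simple m B" using Bs unfolding bip_star_def m_def by auto
    have inj: "inj_on (nbhd B) {0..<m}"
    proof (rule inj_onI)
      fix x y assume xy: "x \<in> {0..<m}" "y \<in> {0..<m}" "nbhd B x = nbhd B y"
      then have "x < m" "y < m" by auto
      then show "x = y" using hs xy(3) unfolding H_simple_def by blast
    qed
    have "set (Lst m B) = h" using Bs(2) unfolding Lst_def phi_def by (auto simp: atLeast0LessThan)
    moreover have "distinct (Lst m B)" unfolding Lst_def using inj by (simp add: distinct_map)
    ultimately show ?thesis by (auto simp: permutations_of_set_def)
  qed
  have RL: "Rel (Lst m B) = B" if B: "B \<in> F" for B
  proof -
    have "B \<in> bip_set n d k" using B unfolding F_def bip_star_def by auto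
    note D = bip_setD[OF this, folded m_def]
    show ?thesis unfolding Rel_def Lst_def nbhd_def using D(1) by auto
  qed
  have R: "Rel xs \<in> F" and LR: "Lst m (Rel xs) = xs" if xs: "xs \<in> permutations_of_set h" for xs
  proof -
    have sx: "set xs = h" and dx: "distinct xs" using xs unfolding permutations_of_set_def by auto
    have lx: "length xs = m" using distinct_card[OF dx] sx ch by simp
    have nb: "nbhd (Rel xs) y = xs ! y" if "y < m" for y
      using that lx unfolding nbhd_def Rel_def by auto
    have sub: "Rel xs \<subseteq> {..<n} \<times> {..<m}"
    proof
      fix z assume "z \<in> Rel xs"
      then obtain x y where z: "z = (x, y)" "y < m" "x \<in> xs ! y" unfolding Rel_def lx by auto
      have "xs ! y \<in> h" using z(2) lx sx by auto
      then show "z \<in> {..<n} \<times> {..<m}" using hD z by auto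
    qed
    have degX: "card {y. (x, y) \<in> Rel xs} = d" if x: "x < n" for x
    proof -
      have "{e \<in> h. x \<in> e} = (\<lambda>y. xs ! y) ` {y. (x, y) \<in> Rel xs}"
      proof (intro set_eqI iffI)
        fix e assume "e \<in> {e \<in> h. x \<in> e}"
        then obtain y where "y < length xs" "e = xs ! y" "x \<in> e" using sx by (auto simp: in_set_conv_nth)
        then show "e \<in> (\<lambda>y. xs ! y) ` {y. (x, y) \<in> Rel xs}" unfolding Rel_def by auto
      next
        fix e assume "e \<in> (\<lambda>y. xs ! y) ` {y. (x, y) \<in> Rel xs}"
        then show "e \<in> {e \<in> h. x \<in> e}" unfolding Rel_def using sx by auto
      qed
      moreover have "inj_on (\<lambda>y. xs ! y) {y. (x, y) \<in> Rel xs}"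
        using dx unfolding Rel_def inj_on_def by (auto simp: nth_eq_iff_index_eq)
      ultimately have "card {e \<in> h. x \<in> e} = card {y. (x, y) \<in> Rel xs}" by (simp add: card_image)
      then show ?thesis using hdeg[OF x] by simp
    qed
    have degY: "card {x. (x, y) \<in> Rel xs} = k" if y: "y < m" for y
    proof -
      have "{x. (x, y) \<in> Rel xs} = xs ! y" unfolding Rel_def using y lx by auto
      moreover have "xs ! y \<in> h" using y lx sx by auto
      ultimately show ?thesis using hD by simp
    qed
    have bip: "Rel xs \<in> bip_set n d k" unfolding bip_set_def Let_def using sub degX degY m_def by auto
    have hsim: "H_simple m (Rel xs)" unfolding H_simple_def
      using nb dx lx by (auto simp: nth_eq_iff_index_eq)
    have ph: "phi m (Rel xs) = h"
    proof -
      have "phi m (Rel xs) = (\<lambda>y. xs ! y) ` {..<m}" unfolding phi_def using nb by auto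
      also have "\<dots> = set xs" using lx by (auto simp: in_set_conv_nth)
      finally show ?thesis using sx by simp
    qed
    show "Rel xs \<in> F" unfolding F_def bip_star_def using bip hsim ph m_def by auto
    show "Lst m (Rel xs) = xs" unfolding Lst_def using nb lx
      by (simp add: list_eq_iff_nth_eq)
  qed
  have "bij_betw (Lst m) F (permutations_of_set h)"
    by (rule bij_betw_byWitness[where f' = Rel]) (use L RL R LR in auto)
  then have "card F = card (permutations_of_set h)" by (rule bij_betw_same_card)
  also have "\<dots> = fact m" using fh ch by simp
  finally show ?thesis unfolding F_def m_def .
qed




lemma tv_alg:
  fixes x y u v e p0 :: real
  assumes nn: "x \<ge> 0" "u \<ge> 0" "y \<ge> 0" "v \<ge> 0"
    and b: "\<bar>x - y\<bar> \<le> e" "\<bar>u - v\<bar> \<le> e" "\<bar>(x + u) - (y + v)\<bar> \<le> e"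
    and s: "x + u > 0" and p: "y + v \<ge> p0" "p0 > 0"
  shows "\<bar>x / (x + u) - y / (y + v)\<bar> \<le> 3 * e / (2 * p0)"
proof -
  define S where "S = x + u"
  define P where "P = y + v"
  have S0: "S > 0" and P0: "P > 0" and Pp: "P \<ge> p0" using s p unfolding S_def P_def by auto
  have e0: "e \<ge> 0" using b(1) by linarith
  have D1: "x / S - y / P = (x - y) / P + (x / S) * ((P - S) / P)"
    using S0 P0 by (simp add: field_simps)
  have D2: "u / S - v / P = (u - v) / P + (u / S) * ((P - S) / P)"
    using S0 P0 by (simp add: field_simps)
  have "x / S + u / S = 1" using S0 unfolding S_def by (simp add: add_divide_distrib[symmetric])
  moreover have "y / P + v / P = 1" using P0 unfolding P_def by (simp add: add_divide_distrib[symmetric])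
  ultimately have sum0: "(x / S - y / P) + (u / S - v / P) = 0" by linarith
  have a1: "\<bar>x / S - y / P\<bar> \<le> \<bar>x - y\<bar> / P + (x / S) * (\<bar>P - S\<bar> / P)"
    unfolding D1 using S0 P0 nn by (auto simp: abs_mult intro!: order.trans[OF abs_triangle_ineq])
  have a2: "\<bar>u / S - v / P\<bar> \<le> \<bar>u - v\<bar> / P + (u / S) * (\<bar>P - S\<bar> / P)"
    unfolding D2 using S0 P0 nn by (auto simp: abs_mult intro!: order.trans[OF abs_triangle_ineq])
  have xu1: "x / S + u / S = 1" using S0 unfolding S_def by (simp add: add_divide_distrib[symmetric])
  have "(x / S) * (\<bar>P - S\<bar> / P) + (u / S) * (\<bar>P - S\<bar> / P) = (x / S + u / S) * (\<bar>P - S\<bar> / P)"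
    by (simp only: distrib_right)
  then have "(x / S) * (\<bar>P - S\<bar> / P) + (u / S) * (\<bar>P - S\<bar> / P) = \<bar>P - S\<bar> / P"
    unfolding xu1 by simp
  then have "\<bar>x / S - y / P\<bar> + \<bar>u / S - v / P\<bar> \<le> (\<bar>x - y\<bar> + \<bar>u - v\<bar> + \<bar>P - S\<bar>) / P"
    using a1 a2 by (simp add: add_divide_distrib)
  also have "\<dots> \<le> (3 * e) / P"
    using b P0 unfolding S_def P_def by (intro divide_right_mono) (auto simp: abs_minus_commute)
  also have "\<dots> \<le> (3 * e) / p0"
    using Pp p e0 by (intro divide_left_mono) auto
  finally have "2 * \<bar>x / S - y / P\<bar> \<le> 3 * e / p0"
    using sum0 by (simp add: abs_minus_commute eq_neg_iff_add_eq_0[symmetric])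
  then show ?thesis unfolding S_def P_def using p by (simp add: field_simps)
qed

lemma dTV_ge: "\<bar>measure_pmf.prob p A - measure_pmf.prob q A\<bar> \<le> dTV p q"
  unfolding dTV_def
proof (rule cSUP_upper)
  show "bdd_above (range (\<lambda>A. \<bar>measure_pmf.prob p A - measure_pmf.prob q A\<bar>))"
  proof (rule bdd_aboveI[where M = 1])
    fix z assume "z \<in> range (\<lambda>A. \<bar>measure_pmf.prob p A - measure_pmf.prob q A\<bar>)"
    then obtain B where "z = \<bar>measure_pmf.prob p B - measure_pmf.prob q B\<bar>" by auto
    moreover have "measure_pmf.prob p B \<le> 1" "measure_pmf.prob q B \<le> 1"
      "measure_pmf.prob p B \<ge> 0" "measure_pmf.prob q B \<ge> 0" by auto
    ultimately show "z \<le> 1" by linarith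
  qed
qed auto

lemma measure_cond:
  assumes "set_pmf p \<inter> A \<noteq> {}"
  shows "measure_pmf.prob (cond_pmf p A) E = measure_pmf.prob p (A \<inter> E) / measure_pmf.prob p A"
  using assms emeasure_measure_pmf_not_zero[OF assms]
  by (simp add: cond_pmf.rep_eq[OF assms] measure_pmf.emeasure_finite)

lemma measure_split: "measure_pmf.prob p A = measure_pmf.prob p (A \<inter> E) + measure_pmf.prob p (A - E)"
proof -
  have "measure_pmf.prob p ((A \<inter> E) \<union> (A - E)) = measure_pmf.prob p (A \<inter> E) + measure_pmf.prob p (A - E)"
    by (rule measure_pmf.finite_measure_Union) auto
  moreover have "(A \<inter> E) \<union> (A - E) = A" by auto
  ultimately show ?thesis by simp
qed

lemma star_sub: "bip_star n d k \<subseteq> bip_set n d k" unfolding bip_star_def by auto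

lemma prob_star:
  assumes "bip_set n d k \<noteq> {}"
  shows "measure_pmf.prob (pi_B n d k) (bip_star n d k) = card (bip_star n d k) / card (bip_set n d k)"
  unfolding pi_B_def using assms finite_bip star_sub
  by (simp add: measure_pmf_of_set Int_absorb1)

lemma prob_star_bound:
  assumes ne: "bip_set n d k \<noteq> {}" and C: "(n choose k) > 0"
  shows "measure_pmf.prob (pi_B n d k) (bip_star n d k) \<ge> 1 - real (n * d div k choose 2) / real (n choose k)"
proof -
  let ?a = "card (bip_set n d k - bip_star n d k)" and ?b = "card (bip_set n d k)"
  have b0: "?b > 0" using ne finite_bip by (simp add: card_gt_0_iff)
  have e: "?a = ?b - card (bip_star n d k)"
    by (rule card_Diff_subset[OF finite_subset[OF star_sub finite_bip] star_sub])
  have "card (bip_star n d k) \<le> ?b" by (rule card_mono[OF finite_bip star_sub])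
  then have cs: "card (bip_star n d k) = ?b - ?a" using e by simp
  have ab: "?a \<le> ?b" by (rule card_mono) (auto simp: finite_bip)
  have "real ?a * real (n choose k) \<le> real (n * d div k choose 2) * real ?b"
    using bad_total[of n d k] by (simp only: of_nat_mult[symmetric] of_nat_le_iff)
  then have "real ?a / real ?b \<le> real (n * d div k choose 2) / real (n choose k)"
    using b0 C by (simp add: field_simps)
  moreover have "measure_pmf.prob (pi_B n d k) (bip_star n d k) = 1 - real ?a / real ?b"
    using prob_star[OF ne] cs ab b0 by (simp add: of_nat_diff field_simps)
  ultimately show ?thesis by linarith
qed

lemma small_m_star:
  assumes "n * d div k < 2"
  shows "bip_star n d k = bip_set n d k"
  using assms unfolding bip_star_def H_simple_def by auto

lemma cond_uniform:
  assumes ne: "bip_star n d k \<noteq> {}"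
  shows "cond_pmf (pi_B n d k) (bip_star n d k) = pmf_of_set (bip_star n d k)"
proof -
  have neB: "bip_set n d k \<noteq> {}" using ne star_sub by blast
  have finS: "finite (bip_star n d k)" using finite_bip star_sub by (rule finite_subset[rotated])
  have ne2: "set_pmf (pi_B n d k) \<inter> bip_star n d k \<noteq> {}"
    unfolding pi_B_def using neB finite_bip ne star_sub by (auto simp: Int_absorb1)
  show ?thesis
  proof (rule pmf_eqI)
    fix B
    show "pmf (cond_pmf (pi_B n d k) (bip_star n d k)) B = pmf (pmf_of_set (bip_star n d k)) B"
    proof -
      have sb: "B \<in> bip_star n d k \<Longrightarrow> B \<in> bip_set n d k" using star_sub by blast
      show ?thesis
      unfolding pmf_cond[OF ne2] using prob_star[OF neB] neB ne finS finite_bip sb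
      by (auto simp: pi_B_def indicator_def card_gt_0_iff)
    qed
  qed
qed

lemma star_count:
  assumes k: "k > 0" and dvd: "k dvd n * d"
  shows "card (bip_star n d k) = card (hyp_set n d k) * fact (n * d div k)"
proof -
  have finS: "finite (bip_star n d k)" using finite_bip star_sub by (rule finite_subset[rotated])
  have img: "phi (n * d div k) ` bip_star n d k \<subseteq> hyp_set n d k" using phi_in_hyp by auto
  have "card (bip_star n d k) = (\<Sum>h\<in>hyp_set n d k. card {B \<in> bip_star n d k. phi (n * d div k) B = h})"
    using sum.group[OF finS finite_hyp_set img, of "\<lambda>_. 1::nat"] by simp
  also have "\<dots> = (\<Sum>h\<in>hyp_set n d k. fact (n * d div k))"
    by (rule sum.cong[OF refl]) (rule fiber_card[OF k dvd])
  finally show ?thesis by simp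
qed

lemma pi_H_map:
  assumes k: "k > 0" and dvd: "k dvd n * d" and ne: "bip_star n d k \<noteq> {}"
  shows "pi_H n d k = map_pmf (phi (n * d div k)) (pmf_of_set (bip_star n d k))"
proof -
  let ?m = "n * d div k"
  have finS: "finite (bip_star n d k)" using finite_bip star_sub by (rule finite_subset[rotated])
  have neH: "hyp_set n d k \<noteq> {}" using ne phi_in_hyp by blast
  have cH: "card (hyp_set n d k) > 0" using neH finite_hyp_set by (simp add: card_gt_0_iff)
  have cS: "card (bip_star n d k) = card (hyp_set n d k) * fact ?m" by (rule star_count[OF k dvd])
  show ?thesis unfolding pi_H_def
  proof (rule pmf_eqI)
    fix h
    have "pmf (map_pmf (phi ?m) (pmf_of_set (bip_star n d k))) h
        = card (bip_star n d k \<inter> phi ?m -` {h}) / card (bip_star n d k)"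
      by (simp add: pmf_map measure_pmf_of_set[OF ne finS])
    also have "\<dots> = pmf (pmf_of_set (hyp_set n d k)) h"
    proof (cases "h \<in> hyp_set n d k")
      case True
      have "bip_star n d k \<inter> phi ?m -` {h} = {B \<in> bip_star n d k. phi ?m B = h}" by auto
      then have "card (bip_star n d k \<inter> phi ?m -` {h}) = fact ?m"
        using fiber_card[OF k dvd True] by simp
      then show ?thesis using True cS cH neH finite_hyp_set
        by (simp add: pmf_of_set[OF neH finite_hyp_set])
    next
      case False
      have "bip_star n d k \<inter> phi ?m -` {h} = {}" using phi_in_hyp False by auto
      then show ?thesis using False by (simp add: pmf_of_set[OF neH finite_hyp_set])
    qed
    finally show "pmf (pmf_of_set (hyp_set n d k)) h = pmf (map_pmf (phi ?m) (pmf_of_set (bip_star n d k))) h"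
      by simp
  qed
qed

lemma expect_geom:
  assumes "0 < p" "p \<le> 1"
  shows "measure_pmf.expectation (geometric_pmf p) (\<lambda>N. real (N + 1) * c) = c / p"
proof -
  have "(\<lambda>N. real (N + 1) * c) = (\<lambda>N. real N * c + c)" by (auto simp: algebra_simps)
  then have "measure_pmf.expectation (geometric_pmf p) (\<lambda>N. real (N + 1) * c)
      = measure_pmf.expectation (geometric_pmf p) (\<lambda>N. real N * c) + measure_pmf.expectation (geometric_pmf p) (\<lambda>N. c)"
    using integrable_real_geometric_pmf[of p] assms
    by (simp add: Bochner_Integration.integral_add)
  also have "\<dots> = (1 - p) / p * c + c"
    using expectation_geometric_pmf[of p] assms by simp
  also have "\<dots> = c / p" using assms by (simp add: field_simps)
  finally show ?thesis .
qed




theorem theorem1p2: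
  fixes n d k :: nat
  assumes k3: "k \<ge> 3"
    and dvd: "k dvd n * d"
  shows
    "(real (n * d div k choose 2) < real (n choose k) \<longrightarrow>
        measure_pmf.prob (pi_B n d k) (bip_star n d k)
          \<ge> 1 - real (n * d div k choose 2) / real (n choose k))
     \<and>
     (\<forall>(\<sigma> :: bigraph pmf) (\<epsilon> :: real) (c0 :: real) (\<tau> :: real) (\<rho> :: real).
        set_pmf \<sigma> \<subseteq> bip_set n d k \<and>
        dTV \<sigma> (pi_B n d k) \<le> \<epsilon> \<and> 0 < \<epsilon> \<and> \<epsilon> < 1 \<and>
        0 < c0 \<and> c0 < 1 - \<epsilon> \<and>
        real (n * d div k choose 2) \<le> c0 * real (n choose k) \<and>
        0 \<le> \<tau> \<and> 0 \<le> \<rho>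
      \<longrightarrow>
        set_pmf \<sigma> \<inter> bip_star n d k \<noteq> {} \<and>
        dTV (hs_output n d k \<sigma>) (pi_H n d k) \<le> 3 * \<epsilon> / (2 * (1 - c0)) \<and>
        hs_runtime n d k \<sigma> \<tau> \<rho> \<le> (\<tau> + \<rho>) / (1 - c0 - \<epsilon>))"
proof -
  have k0: "k > 0" using k3 by simp
  let ?m = "n * d div k"
  let ?C2 = "real (?m choose 2)" and ?C = "real (n choose k)"
  let ?star = "bip_star n d k" and ?bip = "bip_set n d k"
  have P1: "?C2 < ?C \<longrightarrow> measure_pmf.prob (pi_B n d k) ?star \<ge> 1 - ?C2 / ?C"
  proof
    assume lt: "?C2 < ?C"
    have "?C > 0" using lt of_nat_0_le_iff[of "?m choose 2"] by linarith
    then have kn: "k \<le> n" by simp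
    then have Cpos: "(n choose k) > 0" by simp
    show "measure_pmf.prob (pi_B n d k) ?star \<ge> 1 - ?C2 / ?C"
      by (rule prob_star_bound[OF bip_nonempty[OF k0 dvd kn] Cpos])
  qed
  have P2: "\<forall>(\<sigma> :: bigraph pmf) (\<epsilon> :: real) (c0 :: real) (\<tau> :: real) (\<rho> :: real).
        set_pmf \<sigma> \<subseteq> bip_set n d k \<and>
        dTV \<sigma> (pi_B n d k) \<le> \<epsilon> \<and> 0 < \<epsilon> \<and> \<epsilon> < 1 \<and>
        0 < c0 \<and> c0 < 1 - \<epsilon> \<and>
        real (n * d div k choose 2) \<le> c0 * real (n choose k) \<and>
        0 \<le> \<tau> \<and> 0 \<le> \<rho>
      \<longrightarrow>
        set_pmf \<sigma> \<inter> bip_star n d k \<noteq> {} \<and>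
        dTV (hs_output n d k \<sigma>) (pi_H n d k) \<le> 3 * \<epsilon> / (2 * (1 - c0)) \<and>
        hs_runtime n d k \<sigma> \<tau> \<rho> \<le> (\<tau> + \<rho>) / (1 - c0 - \<epsilon>)"
  proof (intro allI impI)
    fix \<sigma> :: "bigraph pmf" and \<epsilon> c0 \<tau> \<rho> :: real
    assume H: "set_pmf \<sigma> \<subseteq> bip_set n d k \<and>
        dTV \<sigma> (pi_B n d k) \<le> \<epsilon> \<and> 0 < \<epsilon> \<and> \<epsilon> < 1 \<and>
        0 < c0 \<and> c0 < 1 - \<epsilon> \<and>
        real (n * d div k choose 2) \<le> c0 * real (n choose k) \<and>
        0 \<le> \<tau> \<and> 0 \<le> \<rho>"
    have sup: "set_pmf \<sigma> \<subseteq> ?bip" and tv: "dTV \<sigma> (pi_B n d k) \<le> \<epsilon>" and e0: "0 < \<epsilon>"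
      and c0: "0 < c0" "c0 < 1 - \<epsilon>" and C2: "?C2 \<le> c0 * ?C" and tr: "0 \<le> \<tau>" "0 \<le> \<rho>"
      using H by auto
    have neB: "?bip \<noteq> {}" using sup set_pmf_not_empty[of \<sigma>] by blast
    have pst: "measure_pmf.prob (pi_B n d k) ?star \<ge> 1 - c0"
    proof (cases "(n choose k) > 0")
      case True
      have "?C2 / ?C \<le> c0" using C2 True by (simp add: divide_le_eq)
      then show ?thesis using prob_star_bound[OF neB True] by linarith
    next
      case False
      then have C0: "(n choose k) = 0" by simp
      have "?C2 \<le> 0" using C2 by (simp only: C0)
      then have "(?m choose 2) = 0" by simp
      then have "?m < 2" using binomial_eq_0_iff[of ?m 2] by blast
      then have "?star = ?bip" by (rule small_m_star)
      then have "measure_pmf.prob (pi_B n d k) ?star = 1"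
        using prob_star[OF neB] neB finite_bip by (simp add: card_gt_0_iff)
      then show ?thesis using c0 by simp
    qed
    define s where "s = measure_pmf.prob \<sigma> ?star"
    have "\<bar>s - measure_pmf.prob (pi_B n d k) ?star\<bar> \<le> \<epsilon>"
      unfolding s_def using dTV_ge[of \<sigma> ?star "pi_B n d k"] tv by linarith
    then have s_lb: "s \<ge> 1 - c0 - \<epsilon>" using pst by linarith
    have s_pos: "s > 0" using s_lb c0 by linarith
    have s_le: "s \<le> 1" unfolding s_def by simp
    have ne1: "set_pmf \<sigma> \<inter> ?star \<noteq> {}"
    proof
      assume "set_pmf \<sigma> \<inter> ?star = {}"
      then have "s = 0" unfolding s_def using measure_Int_set_pmf[of \<sigma> ?star]
        by (simp add: Int_commute)
      then show False using s_pos by simp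
    qed
    have neS: "?star \<noteq> {}" using ne1 by blast
    have ne2: "set_pmf (pi_B n d k) \<inter> ?star \<noteq> {}"
      unfolding pi_B_def using neB finite_bip neS star_sub by (auto simp: Int_absorb1)
    have piH: "pi_H n d k = map_pmf (phi ?m) (cond_pmf (pi_B n d k) ?star)"
      using pi_H_map[OF k0 dvd neS] cond_uniform[OF neS] by simp
    have TV: "dTV (hs_output n d k \<sigma>) (pi_H n d k) \<le> 3 * \<epsilon> / (2 * (1 - c0))"
      unfolding dTV_def
    proof (rule cSUP_least)
      fix F
      define E where "E = phi ?m -` F"
      define x where "x = measure_pmf.prob \<sigma> (?star \<inter> E)"
      define u where "u = measure_pmf.prob \<sigma> (?star - E)"
      define y where "y = measure_pmf.prob (pi_B n d k) (?star \<inter> E)"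
      define v where "v = measure_pmf.prob (pi_B n d k) (?star - E)"
      have sx: "measure_pmf.prob \<sigma> ?star = x + u" unfolding x_def u_def by (rule measure_split)
      have py: "measure_pmf.prob (pi_B n d k) ?star = y + v" unfolding y_def v_def by (rule measure_split)
      have m1: "measure_pmf.prob (hs_output n d k \<sigma>) F = x / (x + u)"
        unfolding hs_output_def using measure_cond[OF ne1, of E] sx by (simp add: E_def x_def)
      have m2: "measure_pmf.prob (pi_H n d k) F = y / (y + v)"
        unfolding piH using measure_cond[OF ne2, of E] py by (simp add: E_def y_def)
      have "\<bar>x / (x + u) - y / (y + v)\<bar> \<le> 3 * \<epsilon> / (2 * (1 - c0))"
      proof (rule tv_alg)
        show "0 \<le> x" "0 \<le> u" "0 \<le> y" "0 \<le> v" unfolding x_def u_def y_def v_def by auto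
        show "\<bar>x - y\<bar> \<le> \<epsilon>" unfolding x_def y_def using dTV_ge[of \<sigma> _ "pi_B n d k"] tv by (meson order.trans)
        show "\<bar>u - v\<bar> \<le> \<epsilon>" unfolding u_def v_def using dTV_ge[of \<sigma> _ "pi_B n d k"] tv by (meson order.trans)
        show "\<bar>(x + u) - (y + v)\<bar> \<le> \<epsilon>" unfolding sx[symmetric] py[symmetric]
          using dTV_ge[of \<sigma> _ "pi_B n d k"] tv by (meson order.trans)
        show "0 < x + u" using sx s_pos s_def by simp
        show "1 - c0 \<le> y + v" using py pst by simp
        show "0 < 1 - c0" using c0 e0 by simp
      qed
      then show "\<bar>measure_pmf.prob (hs_output n d k \<sigma>) F - measure_pmf.prob (pi_H n d k) F\<bar>
                 \<le> 3 * \<epsilon> / (2 * (1 - c0))" using m1 m2 by simp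
    qed simp
    have RT: "hs_runtime n d k \<sigma> \<tau> \<rho> \<le> (\<tau> + \<rho>) / (1 - c0 - \<epsilon>)"
    proof -
      have "hs_runtime n d k \<sigma> \<tau> \<rho> = (\<tau> + \<rho>) / s"
        unfolding hs_runtime_def s_def[symmetric] by (rule expect_geom[OF s_pos s_le])
      also have "\<dots> \<le> (\<tau> + \<rho>) / (1 - c0 - \<epsilon>)"
        using s_lb c0 tr by (intro divide_left_mono) (auto intro: mult_pos_pos)
      finally show ?thesis .
    qed
    show "set_pmf \<sigma> \<inter> bip_star n d k \<noteq> {} \<and>
        dTV (hs_output n d k \<sigma>) (pi_H n d k) \<le> 3 * \<epsilon> / (2 * (1 - c0)) \<and>
        hs_runtime n d k \<sigma> \<tau> \<rho> \<le> (\<tau> + \<rho>) / (1 - c0 - \<epsilon>)"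
      using ne1 TV RT by blast
  qed
  show ?thesis using P1 P2 by blast
qed


end
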